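(* Assume (A3) and (A5). If $\gamma_0\le1$, then for each $\gamma<\gamma_0$ there is a nice constant $\kappa$ depending on $\gamma$ with $\|\mathbf E_N\|\le\kappa/L^{\gamma}$. If $\gamma_0>1$, there is a nice constant $\kappa$ with $\|\mathbf E_N\|\le\kappa/L$.
   Context: For $m\ge1$, $\mathcal S_m$ is a spectral density on $[0,1]$ with covariances $r_m(k)=\int_0^1\mathcal S_m(\nu)e^{2i\pi\nu k}d\nu$. (A3): $\sup_m\max_\nu\mathcal S_m<\infty$, $\inf_m\min_\nu\mathcal S_m>0$. (A5): for some $\gamma_0>0$, $\sup_m\sum_n(1+|n|)^{\gamma_0}|r_m(n)|<\infty$. $M=M(N)$, $L=L(N)$ are integers. $\mathcal R_{m,L}$ is the $L\times L$ Toeplitz matrix with entries $r_m(k-k')$, $\mathbf d_R(\nu)=(1,e^{2i\pi\nu},\dots,e^{2i\pi(R-1)\nu})^T$, $\mathbf a_L=L^{-1/2}\mathbf d_L$, $\epsilon_{m,L}(\nu)=\mathcal S_m(\nu)\mathbf a_L^H(\nu)\mathcal R_{m,L}^{-1}\mathbf a_L(\nu)-1$, and $\mathbf E_N=\int_0^1\big(\frac1M\sum_{m=1}^M\epsilon_{m,L}(\nu)\big)\mathbf d_N(\nu)\mathbf d_N^H(\nu)d\nu$ ($N\times N$). A nice constant is independent of $L,M,N$. *)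

theory Defs
  imports "HOL-Analysis.Analysis" "Jordan_Normal_Form.Matrix"
begin

definition cov :: "(nat \<Rightarrow> real \<Rightarrow> real) \<Rightarrow> nat \<Rightarrow> int \<Rightarrow> complex" where
  "cov S m k = integral {0..1} (\<lambda>\<nu>. complex_of_real (S m \<nu>) * exp (2 * of_real pi * \<i> * of_real \<nu> * of_int k))"

definition toep :: "(nat \<Rightarrow> real \<Rightarrow> real) \<Rightarrow> nat \<Rightarrow> nat \<Rightarrow> complex mat" where
  "toep S m L = mat L L (\<lambda>(i, j). cov S m (int i - int j))"

definition mat_inv :: "complex mat \<Rightarrow> complex mat" where
  "mat_inv A = (THE B. B \<in> carrier_mat (dim_row A) (dim_row A) \<and>
                       A * B = 1\<^sub>m (dim_row A) \<and> B * A = 1\<^sub>m (dim_row A))"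

definition dvec :: "nat \<Rightarrow> real \<Rightarrow> complex vec" where
  "dvec R \<nu> = vec R (\<lambda>k. exp (2 * of_real pi * \<i> * of_real \<nu> * of_nat k))"

definition avec :: "nat \<Rightarrow> real \<Rightarrow> complex vec" where
  "avec L \<nu> = (complex_of_real (1 / sqrt (real L))) \<cdot>\<^sub>v dvec L \<nu>"

definition epsML :: "(nat \<Rightarrow> real \<Rightarrow> real) \<Rightarrow> nat \<Rightarrow> nat \<Rightarrow> real \<Rightarrow> complex" where
  "epsML S m L \<nu> =
     complex_of_real (S m \<nu>) *
       (\<Sum>i<L. cnj (avec L \<nu> $ i) * ((mat_inv (toep S m L) *\<^sub>v avec L \<nu>) $ i)) - 1"

definition EN :: "(nat \<Rightarrow> real \<Rightarrow> real) \<Rightarrow> nat \<Rightarrow> nat \<Rightarrow> nat \<Rightarrow> complex mat" where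
  "EN S M L N = mat N N (\<lambda>(j, k). integral {0..1} (\<lambda>\<nu>.
      ((1 / of_nat M) * (\<Sum>m=1..M. epsML S m L \<nu>)) * (dvec N \<nu> $ j) * cnj (dvec N \<nu> $ k)))"

definition vnorm :: "complex vec \<Rightarrow> real" where
  "vnorm v = sqrt (\<Sum>i<dim_vec v. (cmod (v $ i))\<^sup>2)"

definition op_norm :: "complex mat \<Rightarrow> real" where
  "op_norm A = Sup {vnorm (A *\<^sub>v v) | v. v \<in> carrier_vec (dim_col A) \<and> vnorm v \<le> 1}"

end

theory Submission
  imports Defs "Jordan_Normal_Form.Determinant"
begin

definition ee :: "real \<Rightarrow> int \<Rightarrow> complex" where
  "ee \<nu> k = exp (2 * of_real pi * \<i> * of_real \<nu> * of_int k)"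

lemma ee_add: "ee \<nu> a * ee \<nu> b = ee \<nu> (a + b)"
  unfolding ee_def by (simp add: exp_add[symmetric] algebra_simps)

lemma ee_cnj: "cnj (ee \<nu> k) = ee \<nu> (- k)"
  unfolding ee_def by (simp add: exp_cnj)

lemma ee_zero[simp]: "ee \<nu> 0 = 1"
  unfolding ee_def by simp

lemma ee_norm[simp]: "cmod (ee \<nu> k) = 1"
proof -
  have "ee \<nu> k = exp (\<i> * complex_of_real (2 * pi * \<nu> * of_int k))"
    unfolding ee_def by (simp add: algebra_simps)
  then show ?thesis by (simp only: norm_exp_i_times)
qed

lemma ee_mult_cnj: "ee \<nu> k * cnj (ee \<nu> k) = 1"
  by (simp add: ee_cnj ee_add)

lemma continuous_ee[continuous_intros]: "continuous_on A (\<lambda>\<nu>. ee \<nu> k)"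
  unfolding ee_def by (intro continuous_intros)

lemma ee_integral: "((\<lambda>\<nu>. ee \<nu> k) has_integral (if k = 0 then 1 else 0)) {0..1}"
proof (cases "k = 0")
  case True then show ?thesis using has_integral_const_real[of "1::complex" 0 1] by simp
next
  case False
  define c where "c = 2 * of_real pi * \<i> * of_int k"
  have c0: "c \<noteq> 0" using False by (simp add: c_def)
  have eq: "ee \<nu> k = exp (c * of_real \<nu>)" for \<nu> unfolding ee_def c_def by (simp add: algebra_simps)
  have d: "((\<lambda>\<nu>. exp (c * of_real \<nu>) / c) has_vector_derivative ee x k) (at x within {0..1})" for x
  proof -
    have "((\<lambda>z. exp (c * z) / c) has_field_derivative (exp (c * of_real x) * c) / c) (at (of_real x))"
      by (auto intro!: derivative_eq_intros)
    from has_vector_derivative_real_field[OF this] show ?thesis using c0 eq[of x]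
      by simp
  qed
  have "((\<lambda>\<nu>. ee \<nu> k) has_integral (exp (c * of_real 1) / c - exp (c * of_real 0) / c)) {0..1}"
    by (rule fundamental_theorem_of_calculus) (use d in auto)
  moreover have "exp (c * of_real 1) = 1"
    using exp_integer_2pi[of "of_int k"] unfolding c_def by (simp add: algebra_simps)
  ultimately show ?thesis using False by simp
qed

lemma ee_integrable: "(\<lambda>\<nu>. ee \<nu> k) integrable_on {0..1}"
  using ee_integral by blast

lemma integral_ee: "integral {0..1} (\<lambda>\<nu>. ee \<nu> k) = (if k = 0 then 1 else 0)"
  using ee_integral by (rule integral_unique)

lemma has_integral_trig:
  assumes "finite A"
  shows "((\<lambda>\<nu>. \<Sum>x\<in>A. w x * ee \<nu> (k x)) has_integral (\<Sum>x\<in>A. if k x = 0 then w x else 0)) {0..1}"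
proof -
  have "((\<lambda>\<nu>. \<Sum>x\<in>A. ee \<nu> (k x) * w x) has_integral (\<Sum>x\<in>A. (if k x = 0 then 1 else 0) * w x)) {0..1}"
    by (intro has_integral_sum assms has_integral_mult_left ee_integral)
  moreover have "(\<Sum>x\<in>A. (if k x = 0 then 1 else 0) * w x) = (\<Sum>x\<in>A. if k x = 0 then w x else 0)"
    by (rule sum.cong) auto
  ultimately show ?thesis by (simp add: mult.commute)
qed

lemma has_integral_coef:
  assumes "finite A" and phi: "\<And>q. ((\<lambda>\<nu>. \<phi> \<nu> * ee \<nu> q) has_integral r q) {0..1}"
  shows "((\<lambda>\<nu>. \<phi> \<nu> * (\<Sum>x\<in>A. w x * ee \<nu> (k x))) has_integral (\<Sum>x\<in>A. w x * r (k x))) {0..1}"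
proof -
  have "((\<lambda>\<nu>. \<Sum>x\<in>A. \<phi> \<nu> * ee \<nu> (k x) * w x) has_integral (\<Sum>x\<in>A. r (k x) * w x)) {0..1}"
    by (intro has_integral_sum assms has_integral_mult_left phi)
  then show ?thesis by (simp add: sum_distrib_left algebra_simps)
qed

definition fser :: "(int \<Rightarrow> complex) \<Rightarrow> real \<Rightarrow> complex" where
  "fser c \<nu> = (\<Sum>\<^sub>\<infinity>l. c l * ee \<nu> (- l))"

lemma fser_uniform:
  assumes sc: "(\<lambda>l. cmod (c l)) summable_on UNIV"
  shows "uniform_limit {0..1} (\<lambda>F \<nu>. \<Sum>l\<in>F. c l * ee \<nu> (- l) * ee \<nu> p) (\<lambda>\<nu>. fser c \<nu> * ee \<nu> p)
           (finite_subsets_at_top UNIV)"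
  unfolding uniform_limit_iff
proof (intro allI impI)
  fix e :: real assume e: "e > 0"
  define T where "T = (\<Sum>\<^sub>\<infinity>l. cmod (c l))"
  have "((\<lambda>l. cmod (c l)) has_sum T) UNIV" using sc unfolding T_def by (rule summable_iff_has_sum_infsum[THEN iffD1])
  then have "((\<lambda>F. \<Sum>l\<in>F. cmod (c l)) \<longlongrightarrow> T) (finite_subsets_at_top UNIV)"
    by (simp add: has_sum_def)
  then have ev: "\<forall>\<^sub>F F in finite_subsets_at_top UNIV. dist (\<Sum>l\<in>F. cmod (c l)) T < e"
    using e tendstoD by blast
  show "\<forall>\<^sub>F F in finite_subsets_at_top UNIV. \<forall>x\<in>{0..1}. dist (\<Sum>l\<in>F. c l * ee x (- l) * ee x p) (fser c x * ee x p) < e"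
  proof (rule eventually_mono[OF eventually_conj[OF ev eventually_finite_subsets_at_top_weakI]])
    fix F assume F: "dist (\<Sum>l\<in>F. cmod (c l)) T < e \<and> finite F"
    show "\<forall>x\<in>{0..1}. dist (\<Sum>l\<in>F. c l * ee x (- l) * ee x p) (fser c x * ee x p) < e"
    proof
      fix x :: real
      define t where "t l = c l * ee x (- l) * ee x p" for l
      have nt: "norm (t l) = cmod (c l)" for l by (simp add: t_def norm_mult)
      have ta: "(\<lambda>l. norm (t l)) summable_on A" for A
        using summable_on_subset_banach[OF sc, of A] by (simp add: nt)
      have ts: "t summable_on A" for A by (rule abs_summable_summable[OF ta])
      have cs: "(\<lambda>l. cmod (c l)) summable_on A" for A using summable_on_subset_banach[OF sc] by auto
      have "fser c x * ee x p = (\<Sum>\<^sub>\<infinity>l. t l)"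
        unfolding fser_def t_def by (simp add: infsum_cmult_left')
      also have "\<dots> = (\<Sum>\<^sub>\<infinity>l\<in>UNIV - F. t l) + (\<Sum>\<^sub>\<infinity>l\<in>F. t l)"
        using infsum_Diff[OF ts ts, of F UNIV] by simp
      also have "(\<Sum>\<^sub>\<infinity>l\<in>F. t l) = (\<Sum>l\<in>F. t l)" using F by simp
      finally have "dist (\<Sum>l\<in>F. t l) (fser c x * ee x p) = norm (\<Sum>\<^sub>\<infinity>l\<in>UNIV - F. t l)"
        by (simp add: dist_norm)
      also have "\<dots> \<le> (\<Sum>\<^sub>\<infinity>l\<in>UNIV - F. cmod (c l))"
        using norm_infsum_bound[OF ta] by (simp add: nt)
      also have "\<dots> = T - (\<Sum>l\<in>F. cmod (c l))"
        using infsum_Diff[OF cs cs, of F UNIV] F by (simp add: T_def)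
      also have "\<dots> < e" using F by (simp add: dist_real_def abs_less_iff)
      finally show "dist (\<Sum>l\<in>F. c l * ee x (- l) * ee x p) (fser c x * ee x p) < e"
        by (simp add: t_def)
    qed
  qed
qed

lemma fser_continuous:
  assumes sc: "(\<lambda>l. cmod (c l)) summable_on UNIV"
  shows "continuous_on {0..1} (fser c)"
proof -
  have "continuous_on {0..1} (\<lambda>\<nu>. fser c \<nu> * ee \<nu> 0)"
    by (rule uniform_limit_theorem[OF _ fser_uniform[OF sc]])
       (auto intro!: always_eventually continuous_intros continuous_on_sum)
  then show ?thesis by simp
qed

lemma fser_coef:
  assumes sc: "(\<lambda>l. cmod (c l)) summable_on UNIV"
  shows "((\<lambda>\<nu>. fser c \<nu> * ee \<nu> p) has_integral c p) {0..1}"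
proof -
  obtain I J where I: "\<And>F. ((\<lambda>\<nu>. \<Sum>l\<in>F. c l * ee \<nu> (- l) * ee \<nu> p) has_integral I F) {0..1}"
    and J: "((\<lambda>\<nu>. fser c \<nu> * ee \<nu> p) has_integral J) {0..1}"
    and lim: "(I \<longlongrightarrow> J) (finite_subsets_at_top UNIV)"
    by (rule uniform_limit_integral[OF fser_uniform[OF sc]])
       (auto intro!: continuous_intros continuous_on_sum)
  have "\<forall>\<^sub>F F in finite_subsets_at_top UNIV. I F = c p"
    unfolding eventually_finite_subsets_at_top
  proof (intro exI[of _ "{p}"] conjI allI impI)
    fix F :: "int set" assume F: "finite F \<and> {p} \<subseteq> F \<and> F \<subseteq> UNIV"
    have "((\<lambda>\<nu>. \<Sum>l\<in>F. c l * ee \<nu> (p - l)) has_integral (\<Sum>l\<in>F. if p - l = 0 then c l else 0)) {0..1}"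
      using F by (intro has_integral_trig) auto
    moreover have "(\<Sum>l\<in>F. if p - l = 0 then c l else 0) = c p"
      using F by (simp add: sum.delta)
    moreover have "(\<lambda>\<nu>. \<Sum>l\<in>F. c l * ee \<nu> (- l) * ee \<nu> p) = (\<lambda>\<nu>. \<Sum>l\<in>F. c l * ee \<nu> (p - l))"
      by (simp add: mult.assoc ee_add algebra_simps)
    ultimately show "I F = c p" using I[of F] has_integral_unique by metis
  qed auto
  then have "(I \<longlongrightarrow> c p) (finite_subsets_at_top UNIV)"
    by (rule tendsto_eventually)
  with lim have "J = c p" using tendsto_unique[OF finite_subsets_at_top_neq_bot] by blast
  with J show ?thesis by simp
qed


lemma S_times_cont_integrable:
  fixes s :: "real \<Rightarrow> real" and h :: "real \<Rightarrow> complex"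
  assumes s: "s integrable_on {0..1}" and pos: "\<And>\<nu>. \<nu> \<in> {0..1} \<Longrightarrow> 0 \<le> s \<nu>"
    and h: "continuous_on {0..1} h"
  shows "(\<lambda>\<nu>. complex_of_real (s \<nu>) * h \<nu>) integrable_on {0..1}"
proof -
  have sa: "s absolutely_integrable_on {0..1}"
    by (rule nonnegative_absolutely_integrable_1[OF s pos])
  have ca: "(complex_of_real \<circ> s) absolutely_integrable_on {0..1}"
    by (rule absolutely_integrable_linear[OF sa bounded_linear_of_real])
  have hm: "h \<in> borel_measurable (lebesgue_on {0..1})"
    by (rule continuous_imp_measurable_on_sets_lebesgue[OF h]) auto
  have hb: "bounded (h ` {0..1})"
    by (rule compact_imp_bounded[OF compact_continuous_image[OF h]]) auto
  have "(\<lambda>x. h x * (complex_of_real \<circ> s) x) absolutely_integrable_on {0..1}"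
    by (rule absolutely_integrable_bounded_measurable_product[OF bilinear_times hm _ hb ca]) auto
  then have "(\<lambda>x. h x * (complex_of_real \<circ> s) x) integrable_on {0..1}"
    using absolutely_integrable_on_def by blast
  then show ?thesis by (simp add: mult.commute o_def)
qed

lemma S_coef:
  fixes s :: "real \<Rightarrow> real"
  assumes s: "s integrable_on {0..1}" and pos: "\<And>\<nu>. \<nu> \<in> {0..1} \<Longrightarrow> 0 \<le> s \<nu>"
  shows "((\<lambda>\<nu>. complex_of_real (s \<nu>) * ee \<nu> q) has_integral
            integral {0..1} (\<lambda>\<nu>. complex_of_real (s \<nu>) * ee \<nu> q)) {0..1}"
  using S_times_cont_integrable[OF s pos continuous_ee] by (simp add: integrable_integral)

lemma quad_form:
  assumes phi: "\<And>q. ((\<lambda>\<nu>. \<phi> \<nu> * ee \<nu> q) has_integral r q) {0..1}"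
  shows "((\<lambda>\<nu>. \<phi> \<nu> * of_real ((cmod (\<Sum>j<n. x j * ee \<nu> (- int j)))\<^sup>2)) has_integral
            (\<Sum>i<n. cnj (x i) * (\<Sum>j<n. r (int i - int j) * x j))) {0..1}"
proof -
  have "((\<lambda>\<nu>. \<phi> \<nu> * (\<Sum>ij\<in>{..<n}\<times>{..<n}. (cnj (x (fst ij)) * x (snd ij)) * ee \<nu> (int (fst ij) - int (snd ij))))
     has_integral (\<Sum>ij\<in>{..<n}\<times>{..<n}. (cnj (x (fst ij)) * x (snd ij)) * r (int (fst ij) - int (snd ij)))) {0..1}"
    by (rule has_integral_coef[OF _ phi]) auto
  moreover have "(\<Sum>ij\<in>{..<n}\<times>{..<n}. (cnj (x (fst ij)) * x (snd ij)) * ee \<nu> (int (fst ij) - int (snd ij)))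
      = of_real ((cmod (\<Sum>j<n. x j * ee \<nu> (- int j)))\<^sup>2)" for \<nu>
  proof -
    have "of_real ((cmod (\<Sum>j<n. x j * ee \<nu> (- int j)))\<^sup>2) =
          (\<Sum>j<n. x j * ee \<nu> (- int j)) * cnj (\<Sum>j<n. x j * ee \<nu> (- int j))"
      by (rule complex_norm_square)
    also have "\<dots> = (\<Sum>i<n. \<Sum>j<n. (cnj (x i) * x j) * (ee \<nu> (int i) * ee \<nu> (- int j)))"
      by (simp add: sum_distrib_left sum_distrib_right ee_cnj algebra_simps)
    also have "\<dots> = (\<Sum>i<n. \<Sum>j<n. (cnj (x i) * x j) * ee \<nu> (int i - int j))"
      by (simp add: ee_add)
    also have "\<dots> = (\<Sum>ij\<in>{..<n}\<times>{..<n}. (cnj (x (fst ij)) * x (snd ij)) * ee \<nu> (int (fst ij) - int (snd ij)))"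
      by (simp add: sum.cartesian_product case_prod_beta)
    finally show ?thesis by simp
  qed
  moreover have "(\<Sum>ij\<in>{..<n}\<times>{..<n}. (cnj (x (fst ij)) * x (snd ij)) * r (int (fst ij) - int (snd ij)))
      = (\<Sum>i<n. cnj (x i) * (\<Sum>j<n. r (int i - int j) * x j))"
    by (simp add: sum.cartesian_product sum_distrib_left algebra_simps case_prod_beta)
  ultimately show ?thesis by simp
qed

lemma one_coef: "((\<lambda>\<nu>. 1 * ee \<nu> q) has_integral (if q = 0 then 1 else 0)) {0..1}"
  using ee_integral by simp

lemma parseval:
  "((\<lambda>\<nu>. (cmod (\<Sum>j<n. x j * ee \<nu> (- int j)))\<^sup>2) has_integral (\<Sum>i<n. (cmod (x i))\<^sup>2)) {0..1}"
proof -
  have "((\<lambda>\<nu>. 1 * of_real ((cmod (\<Sum>j<n. x j * ee \<nu> (- int j)))\<^sup>2)) has_integral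
            (\<Sum>i<n. cnj (x i) * (\<Sum>j<n. (if int i - int j = 0 then 1 else 0) * x j))) {0..1}"
    by (rule quad_form[OF one_coef])
  moreover have "(\<Sum>i<n. cnj (x i) * (\<Sum>j<n. (if int i - int j = 0 then 1 else 0) * x j)) =
     of_real (\<Sum>i<n. (cmod (x i))\<^sup>2)"
  proof -
    have "(\<Sum>j<n. (if int i - int j = 0 then 1 else 0) * x j) = x i" if "i < n" for i
    proof -
      have "(\<Sum>j<n. (if int i - int j = 0 then 1 else 0) * x j) = (\<Sum>j<n. if i = j then x j else 0)"
        by (rule sum.cong) auto
      then show ?thesis using that by simp
    qed
    then have "(\<Sum>i<n. cnj (x i) * (\<Sum>j<n. (if int i - int j = 0 then 1 else 0) * x j)) = (\<Sum>i<n. cnj (x i) * x i)"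
      by (intro sum.cong) auto
    also have "\<dots> = of_real (\<Sum>i<n. (cmod (x i))\<^sup>2)"
      unfolding of_real_sum complex_norm_square by (simp only: mult.commute)
    finally show ?thesis .
  qed
  ultimately have "((\<lambda>\<nu>. complex_of_real ((cmod (\<Sum>j<n. x j * ee \<nu> (- int j)))\<^sup>2)) has_integral
       of_real (\<Sum>i<n. (cmod (x i))\<^sup>2)) {0..1}" by simp
  from has_integral_linear[OF this bounded_linear_Re] show ?thesis by (simp add: o_def)
qed

lemma quad_pos:
  fixes s :: "real \<Rightarrow> real"
  assumes s: "s integrable_on {0..1}" and lb: "\<And>\<nu>. \<nu> \<in> {0..1} \<Longrightarrow> c \<le> s \<nu>" and c: "0 \<le> c"
  shows "c * (\<Sum>i<n. (cmod (x i))\<^sup>2) \<le>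
    Re (\<Sum>i<n. cnj (x i) * (\<Sum>j<n. integral {0..1} (\<lambda>\<nu>. complex_of_real (s \<nu>) * ee \<nu> (int i - int j)) * x j))"
proof -
  have pos: "\<And>\<nu>. \<nu> \<in> {0..1} \<Longrightarrow> 0 \<le> s \<nu>" using lb c order_trans by blast
  have "((\<lambda>\<nu>. complex_of_real (s \<nu>) * of_real ((cmod (\<Sum>j<n. x j * ee \<nu> (- int j)))\<^sup>2)) has_integral
      (\<Sum>i<n. cnj (x i) * (\<Sum>j<n. integral {0..1} (\<lambda>\<nu>. complex_of_real (s \<nu>) * ee \<nu> (int i - int j)) * x j))) {0..1}"
    by (rule quad_form[OF S_coef[OF s pos]])
  from has_integral_linear[OF this bounded_linear_Re]
  have A: "((\<lambda>\<nu>. s \<nu> * (cmod (\<Sum>j<n. x j * ee \<nu> (- int j)))\<^sup>2) has_integral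
      Re (\<Sum>i<n. cnj (x i) * (\<Sum>j<n. integral {0..1} (\<lambda>\<nu>. complex_of_real (s \<nu>) * ee \<nu> (int i - int j)) * x j))) {0..1}"
    by (simp add: o_def)
  have B: "((\<lambda>\<nu>. c * (cmod (\<Sum>j<n. x j * ee \<nu> (- int j)))\<^sup>2) has_integral c * (\<Sum>i<n. (cmod (x i))\<^sup>2)) {0..1}"
    by (rule has_integral_mult_right[OF parseval])
  show ?thesis
    by (rule has_integral_le[OF B A]) (auto intro!: mult_right_mono lb)
qed


lemma infsum_fsum:
  fixes f :: "'i \<Rightarrow> 'a \<Rightarrow> real"
  assumes "finite I" and "\<And>i. i \<in> I \<Longrightarrow> f i summable_on A"
  shows "(\<lambda>x. \<Sum>i\<in>I. f i x) summable_on A \<and> infsum (\<lambda>x. \<Sum>i\<in>I. f i x) A = (\<Sum>i\<in>I. infsum (f i) A)"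
  using assms
proof (induction I rule: finite_induct)
  case empty then show ?case by simp
next
  case (insert j I)
  then have s1: "f j summable_on A" and s2: "(\<lambda>x. \<Sum>i\<in>I. f i x) summable_on A"
    and e2: "infsum (\<lambda>x. \<Sum>i\<in>I. f i x) A = (\<Sum>i\<in>I. infsum (f i) A)" by auto
  show ?case using insert(1,2) summable_on_add[OF s1 s2] infsum_add[OF s1 s2] e2 by simp
qed

definition Tt :: "(int \<Rightarrow> complex) \<Rightarrow> nat \<Rightarrow> nat \<Rightarrow> real" where
  "Tt r L i = (\<Sum>\<^sub>\<infinity>l. if l \<in> (\<lambda>j. int i - int j) ` {..<L} then 0 else cmod (r l))"

lemma summable_if0:
  fixes f :: "'a \<Rightarrow> real"
  assumes "f summable_on UNIV" "\<And>x. 0 \<le> f x"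
  shows "(\<lambda>l. if P l then 0 else f l) summable_on UNIV"
  by (rule summable_on_comparison_test[OF assms(1)]) (auto simp: assms(2))

lemma Tt_nonneg: "0 \<le> Tt r L i"
  unfolding Tt_def by (rule infsum_nonneg) auto

lemma Tt_le:
  assumes sc: "(\<lambda>l. cmod (r l)) summable_on UNIV"
  shows "Tt r L i \<le> (\<Sum>\<^sub>\<infinity>l. cmod (r l))"
  unfolding Tt_def by (rule infsum_mono[OF summable_if0[OF sc] sc]) auto

lemma b_bound:
  assumes sc: "(\<lambda>l. cmod (r l)) summable_on UNIV"
  shows "cmod (fser r \<nu> * ee \<nu> (int i) - (\<Sum>j<L. r (int i - int j) * ee \<nu> (int j))) \<le> Tt r L i"
proof -
  define W where "W = (\<lambda>j. int i - int j) ` {..<L}"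
  define t where "t l = r l * ee \<nu> (int i - l)" for l
  have nt: "norm (t l) = cmod (r l)" for l by (simp add: t_def norm_mult)
  have ta: "(\<lambda>l. norm (t l)) summable_on A" for A
    using summable_on_subset_banach[OF sc, of A] by (simp add: nt)
  have ts: "t summable_on A" for A by (rule abs_summable_summable[OF ta])
  have fW: "finite W" unfolding W_def by simp
  have "fser r \<nu> * ee \<nu> (int i) = (\<Sum>\<^sub>\<infinity>l. r l * ee \<nu> (- l) * ee \<nu> (int i))"
    unfolding fser_def by (rule infsum_cmult_left'[symmetric])
  also have "\<dots> = (\<Sum>\<^sub>\<infinity>l. t l)"
    unfolding t_def by (simp add: mult.assoc ee_add algebra_simps)
  also have "\<dots> = (\<Sum>\<^sub>\<infinity>l\<in>UNIV - W. t l) + (\<Sum>l\<in>W. t l)"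
    using infsum_Diff[OF ts ts, of W UNIV] fW by simp
  also have "(\<Sum>l\<in>W. t l) = (\<Sum>j<L. r (int i - int j) * ee \<nu> (int j))"
  proof -
    have "inj_on (\<lambda>j. int i - int j) {..<L}" by (auto simp: inj_on_def)
    then show ?thesis unfolding W_def t_def by (simp add: sum.reindex)
  qed
  finally have "cmod (fser r \<nu> * ee \<nu> (int i) - (\<Sum>j<L. r (int i - int j) * ee \<nu> (int j)))
      = norm (\<Sum>\<^sub>\<infinity>l\<in>UNIV - W. t l)" by simp
  also have "\<dots> \<le> (\<Sum>\<^sub>\<infinity>l\<in>UNIV - W. cmod (r l))"
    using norm_infsum_bound[OF ta] by (simp add: nt)
  also have "\<dots> = Tt r L i"
    unfolding Tt_def W_def[symmetric] by (rule infsum_cong_neutral) auto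
  finally show ?thesis .
qed

lemma cnt_bound:
  "card {i\<in>{..<L}. l \<notin> (\<lambda>j. int i - int j) ` {..<L}} \<le> min (nat \<bar>l\<bar>) L"
proof -
  have sub: "{i\<in>{..<L}. l \<notin> (\<lambda>j. int i - int j) ` {..<L}} \<subseteq> {i\<in>{..<L}. int i < l} \<union> {i\<in>{..<L}. int i \<ge> l + int L}"
  proof
    fix i assume "i \<in> {i\<in>{..<L}. l \<notin> (\<lambda>j. int i - int j) ` {..<L}}"
    then have iL: "i < L" and nW: "\<And>j. j < L \<Longrightarrow> l \<noteq> int i - int j" by auto
    show "i \<in> {i\<in>{..<L}. int i < l} \<union> {i\<in>{..<L}. int i \<ge> l + int L}"
    proof (rule ccontr)
      assume "\<not> ?thesis"
      then have "l \<le> int i" "int i < l + int L" using iL by auto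
      then have "nat (int i - l) < L" "l = int i - int (nat (int i - l))" by auto
      then show False using nW by blast
    qed
  qed
  have c1: "card ({i\<in>{..<L}. int i < l} \<union> {i\<in>{..<L}. int i \<ge> l + int L}) \<le> nat \<bar>l\<bar>"
  proof (cases "l \<ge> 0")
    case True
    have "{i\<in>{..<L}. int i < l} \<union> {i\<in>{..<L}. int i \<ge> l + int L} \<subseteq> {..<nat l}" using True by auto
    from card_mono[OF _ this] show ?thesis using True by auto
  next
    case False
    have "{i\<in>{..<L}. int i < l} \<union> {i\<in>{..<L}. int i \<ge> l + int L} \<subseteq> {nat (l + int L)..<L}" using False by auto
    from card_mono[OF _ this] show ?thesis using False by auto
  qed
  have c2: "card {i\<in>{..<L}. l \<notin> (\<lambda>j. int i - int j) ` {..<L}} \<le> L"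
    using card_mono[of "{..<L}" "{i\<in>{..<L}. l \<notin> (\<lambda>j. int i - int j) ` {..<L}}"] by auto
  have "card {i\<in>{..<L}. l \<notin> (\<lambda>j. int i - int j) ` {..<L}} \<le> card ({i\<in>{..<L}. int i < l} \<union> {i\<in>{..<L}. int i \<ge> l + int L})"
    by (rule card_mono[OF _ sub]) auto
  with c1 c2 show ?thesis by (intro min.boundedI) auto
qed

lemma min_powr_bound:
  fixes x y g :: real
  assumes "0 \<le> x" "0 < y" "0 < g" "g \<le> 1"
  shows "min x y \<le> x powr g * y powr (1 - g)"
proof (cases "x \<le> y")
  case True
  show ?thesis
  proof (cases "x = 0")
    case True then show ?thesis using assms by simp
  next
    case False
    then have x0: "0 < x" using assms by simp
    have "x = x powr g * x powr (1 - g)" using x0 by (simp add: powr_add[symmetric])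
    also have "\<dots> \<le> x powr g * y powr (1 - g)"
      using True x0 assms by (intro mult_left_mono powr_mono2) auto
    finally show ?thesis using True by simp
  qed
next
  case False
  have "y = y powr g * y powr (1 - g)" using assms by (simp add: powr_add[symmetric])
  also have "\<dots> \<le> x powr g * y powr (1 - g)"
    using False assms by (intro mult_right_mono powr_mono2) auto
  finally show ?thesis using False by simp
qed

lemma Tt_sum:
  fixes r :: "int \<Rightarrow> complex" and \<gamma>0 C :: real and L :: nat
  assumes g0: "0 < \<gamma>0" and L: "1 \<le> L"
    and sw: "(\<lambda>n::int. (1 + \<bar>real_of_int n\<bar>) powr \<gamma>0 * cmod (r n)) summable_on UNIV"
    and sC: "(\<Sum>\<^sub>\<infinity>n::int. (1 + \<bar>real_of_int n\<bar>) powr \<gamma>0 * cmod (r n)) \<le> C"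
  shows "(\<Sum>i<L. Tt r L i) \<le> real L powr (1 - min \<gamma>0 1) * C"
proof -
  define g where "g = min \<gamma>0 1"
  have g: "0 < g" "g \<le> 1" "g \<le> \<gamma>0" using g0 by (auto simp: g_def)
  have w1: "cmod (r l) \<le> (1 + \<bar>real_of_int l\<bar>) powr \<gamma>0 * cmod (r l)" for l
  proof -
    have "1 \<le> (1 + \<bar>real_of_int l\<bar>) powr \<gamma>0" using g0 by (intro ge_one_powr_ge_zero) auto
    then show ?thesis by (simp add: mult_le_cancel_right1)
  qed
  have sc: "(\<lambda>l. cmod (r l)) summable_on UNIV"
    by (rule summable_on_comparison_test[OF sw]) (auto simp: w1)
  define h where "h i l = (if l \<in> (\<lambda>j. int i - int j) ` {..<L} then 0 else cmod (r l))" for i l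
  have hs: "h i summable_on UNIV" for i unfolding h_def by (rule summable_if0[OF sc]) auto
  have "(\<Sum>i<L. Tt r L i) = (\<Sum>i<L. infsum (h i) UNIV)" unfolding Tt_def h_def by simp
  also have "\<dots> = infsum (\<lambda>l. \<Sum>i<L. h i l) UNIV"
    using infsum_fsum[of "{..<L}" h UNIV] hs by simp
  also have "\<dots> \<le> infsum (\<lambda>l. real L powr (1 - g) * ((1 + \<bar>real_of_int l\<bar>) powr \<gamma>0 * cmod (r l))) UNIV"
  proof (rule infsum_mono)
    show "(\<lambda>l. \<Sum>i<L. h i l) summable_on UNIV" using infsum_fsum[of "{..<L}" h UNIV] hs by simp
    show "(\<lambda>l. real L powr (1 - g) * ((1 + \<bar>real_of_int l\<bar>) powr \<gamma>0 * cmod (r l))) summable_on UNIV"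
      using sw by (rule summable_on_cmult_right)
    fix l :: int
    have "(\<Sum>i<L. h i l) = cmod (r l) * real (card {i\<in>{..<L}. l \<notin> (\<lambda>j. int i - int j) ` {..<L}})"
      unfolding h_def by (simp add: sum.If_cases Int_def)
    also have "\<dots> \<le> cmod (r l) * min \<bar>real_of_int l\<bar> (real L)"
    proof -
      have "real (card {i\<in>{..<L}. l \<notin> (\<lambda>j. int i - int j) ` {..<L}}) \<le> real (min (nat \<bar>l\<bar>) L)"
        using cnt_bound[of L l] by linarith
      also have "\<dots> = min \<bar>real_of_int l\<bar> (real L)"
      proof -
        have e: "real (nat \<bar>l\<bar>) = \<bar>real_of_int l\<bar>" by simp
        have e2: "(nat \<bar>l\<bar> \<le> L) = (\<bar>real_of_int l\<bar> \<le> real L)" using e by (metis of_nat_le_iff)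
        show ?thesis unfolding min_def using e e2 by auto
      qed
      finally show ?thesis by (intro mult_left_mono) auto
    qed
    also have "\<dots> \<le> cmod (r l) * (\<bar>real_of_int l\<bar> powr g * real L powr (1 - g))"
      using L g by (intro mult_left_mono min_powr_bound) auto
    also have "\<dots> \<le> cmod (r l) * ((1 + \<bar>real_of_int l\<bar>) powr \<gamma>0 * real L powr (1 - g))"
    proof -
      have "\<bar>real_of_int l\<bar> powr g \<le> (1 + \<bar>real_of_int l\<bar>) powr g"
        using g by (intro powr_mono2) auto
      also have "\<dots> \<le> (1 + \<bar>real_of_int l\<bar>) powr \<gamma>0"
        using g by (intro powr_mono) auto
      finally show ?thesis by (intro mult_left_mono mult_right_mono) auto
    qed
    finally show "(\<Sum>i<L. h i l) \<le> real L powr (1 - g) * ((1 + \<bar>real_of_int l\<bar>) powr \<gamma>0 * cmod (r l))"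
      by (simp add: algebra_simps)
  qed
  also have "\<dots> = real L powr (1 - g) * (\<Sum>\<^sub>\<infinity>n::int. (1 + \<bar>real_of_int n\<bar>) powr \<gamma>0 * cmod (r n))"
    by (simp add: infsum_cmult_right')
  also have "\<dots> \<le> real L powr (1 - g) * C" using sC by (intro mult_left_mono) auto
  finally show ?thesis unfolding g_def .
qed


definition av :: "nat \<Rightarrow> real \<Rightarrow> nat \<Rightarrow> complex" where
  "av L \<nu> i = complex_of_real (1 / sqrt (real L)) * ee \<nu> (int i)"

lemma av_norm: "cmod (av L \<nu> i) = 1 / sqrt (real L)"
  by (simp add: av_def norm_mult norm_divide)

lemma av_inner: "1 \<le> L \<Longrightarrow> (\<Sum>i<L. cnj (av L \<nu> i) * av L \<nu> i) = 1"
proof -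
  assume L: "1 \<le> L"
  have "cnj (av L \<nu> i) * av L \<nu> i = complex_of_real (1 / real L)" for i
  proof -
    have "cnj (av L \<nu> i) * av L \<nu> i = of_real ((cmod (av L \<nu> i))\<^sup>2)"
      using complex_norm_square[of "av L \<nu> i"] by (simp add: mult.commute)
    also have "\<dots> = of_real (1 / real L)" by (simp add: av_norm power_divide)
    finally show ?thesis .
  qed
  then show ?thesis using L by simp
qed

definition bv :: "(int \<Rightarrow> complex) \<Rightarrow> nat \<Rightarrow> real \<Rightarrow> nat \<Rightarrow> complex" where
  "bv r L \<nu> i = fser r \<nu> * av L \<nu> i - (\<Sum>j<L. r (int i - int j) * av L \<nu> j)"

lemma bv_bound:
  assumes sc: "(\<lambda>l. cmod (r l)) summable_on UNIV"
  shows "cmod (bv r L \<nu> i) \<le> Tt r L i / sqrt (real L)"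
proof -
  have "bv r L \<nu> i = complex_of_real (1 / sqrt (real L)) *
      (fser r \<nu> * ee \<nu> (int i) - (\<Sum>j<L. r (int i - int j) * ee \<nu> (int j)))"
    unfolding bv_def av_def by (simp add: sum_distrib_left algebra_simps)
  then have "cmod (bv r L \<nu> i) = (1 / sqrt (real L)) *
      cmod (fser r \<nu> * ee \<nu> (int i) - (\<Sum>j<L. r (int i - int j) * ee \<nu> (int j)))"
    by (simp add: norm_mult norm_divide)
  also have "\<dots> \<le> (1 / sqrt (real L)) * Tt r L i"
    by (intro mult_left_mono b_bound[OF sc]) auto
  finally show ?thesis by simp
qed

locale wsum =
  fixes r :: "int \<Rightarrow> complex" and \<gamma>0 C :: real
  assumes g0: "0 < \<gamma>0"
    and sw: "(\<lambda>n::int. (1 + \<bar>real_of_int n\<bar>) powr \<gamma>0 * cmod (r n)) summable_on UNIV"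
    and sC: "(\<Sum>\<^sub>\<infinity>n::int. (1 + \<bar>real_of_int n\<bar>) powr \<gamma>0 * cmod (r n)) \<le> C"
begin

lemma w1: "cmod (r l) \<le> (1 + \<bar>real_of_int l\<bar>) powr \<gamma>0 * cmod (r l)"
proof -
  have "1 \<le> (1 + \<bar>real_of_int l\<bar>) powr \<gamma>0" using g0 by (intro ge_one_powr_ge_zero) auto
  then show ?thesis by (simp add: mult_le_cancel_right1)
qed

lemma sc: "(\<lambda>l. cmod (r l)) summable_on UNIV"
  by (rule summable_on_comparison_test[OF sw]) (auto simp: w1)

lemma A_le: "(\<Sum>\<^sub>\<infinity>l. cmod (r l)) \<le> C"
  using infsum_mono[OF sc sw w1] sC by linarith

lemma C_nonneg: "0 \<le> C"
  using A_le infsum_nonneg[of UNIV "\<lambda>l. cmod (r l)"] by auto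

lemma inner_ab:
  assumes L: "1 \<le> L"
  shows "cmod (\<Sum>i<L. cnj (av L \<nu> i) * bv r L \<nu> i) \<le> C * real L powr (- min \<gamma>0 1)"
proof -
  have "cmod (\<Sum>i<L. cnj (av L \<nu> i) * bv r L \<nu> i) \<le> (\<Sum>i<L. cmod (cnj (av L \<nu> i) * bv r L \<nu> i))"
    by (rule norm_sum)
  also have "\<dots> \<le> (\<Sum>i<L. (1 / sqrt (real L)) * (Tt r L i / sqrt (real L)))"
  proof (intro sum_mono)
    fix i
    have "cmod (cnj (av L \<nu> i) * bv r L \<nu> i) = (1 / sqrt (real L)) * cmod (bv r L \<nu> i)"
      by (simp only: norm_mult complex_mod_cnj av_norm)
    also have "\<dots> \<le> (1 / sqrt (real L)) * (Tt r L i / sqrt (real L))"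
      by (intro mult_left_mono bv_bound[OF sc]) auto
    finally show "cmod (cnj (av L \<nu> i) * bv r L \<nu> i) \<le> (1 / sqrt (real L)) * (Tt r L i / sqrt (real L))" .
  qed
  also have "\<dots> = (\<Sum>i<L. Tt r L i) / real L"
    using L by (simp add: sum_divide_distrib)
  also have "\<dots> \<le> real L powr (1 - min \<gamma>0 1) * C / real L"
    by (intro divide_right_mono Tt_sum[OF g0 L sw sC]) auto
  also have "\<dots> = C * real L powr (- min \<gamma>0 1)"
    using L by (simp add: powr_diff powr_minus divide_simps)
  finally show ?thesis .
qed

lemma norm_b:
  assumes L: "1 \<le> L"
  shows "(\<Sum>i<L. (cmod (bv r L \<nu> i))\<^sup>2) \<le> C * C * real L powr (- min \<gamma>0 1)"
proof -
  have "(\<Sum>i<L. (cmod (bv r L \<nu> i))\<^sup>2) \<le> (\<Sum>i<L. C * Tt r L i / real L)"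
  proof (intro sum_mono)
    fix i
    have "(cmod (bv r L \<nu> i))\<^sup>2 \<le> (Tt r L i / sqrt (real L))\<^sup>2"
      by (intro power_mono bv_bound[OF sc]) auto
    also have "\<dots> = Tt r L i * Tt r L i / real L" using L by (simp add: power2_eq_square)
    also have "\<dots> \<le> C * Tt r L i / real L"
      using Tt_le[OF sc, of L i] A_le Tt_nonneg[of r L i]
      by (intro divide_right_mono mult_right_mono) auto
    finally show "(cmod (bv r L \<nu> i))\<^sup>2 \<le> C * Tt r L i / real L" .
  qed
  also have "\<dots> = C * (\<Sum>i<L. Tt r L i) / real L"
    by (simp add: sum_divide_distrib sum_distrib_left)
  also have "\<dots> \<le> C * (real L powr (1 - min \<gamma>0 1) * C) / real L"
    using C_nonneg by (intro divide_right_mono mult_left_mono Tt_sum[OF g0 L sw sC]) auto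
  also have "\<dots> = C * C * real L powr (- min \<gamma>0 1)"
    using L by (simp add: powr_diff powr_minus divide_simps)
  finally show ?thesis .
qed

end

lemma av_sq: "1 \<le> L \<Longrightarrow> (\<Sum>i<L. (cmod (av L \<nu> i))\<^sup>2) = 1"
  by (simp add: av_norm power_divide)

locale wpos = wsum +
  fixes c :: real
  assumes c0: "0 < c"
    and herm: "\<And>k. r (- k) = cnj (r k)"
    and pos: "\<And>n x. c * (\<Sum>i<n. (cmod (x i))\<^sup>2) \<le> Re (\<Sum>i<n. cnj (x i) * (\<Sum>j<n. r (int i - int j) * x j))"
begin

lemma inner_ab_eq:
  "(\<Sum>i<L. cnj (av L \<nu> i) * bv r L \<nu> i) = fser r \<nu> * (\<Sum>i<L. cnj (av L \<nu> i) * av L \<nu> i)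
     - (\<Sum>i<L. cnj (av L \<nu> i) * (\<Sum>j<L. r (int i - int j) * av L \<nu> j))"
  unfolding bv_def by (simp add: sum_distrib_left sum_subtractf algebra_simps)

lemma g_lower_L:
  assumes L: "1 \<le> L"
  shows "c - C * real L powr (- min \<gamma>0 1) \<le> cmod (fser r \<nu>)"
proof -
  have e: "fser r \<nu> = (\<Sum>i<L. cnj (av L \<nu> i) * bv r L \<nu> i) + (\<Sum>i<L. cnj (av L \<nu> i) * (\<Sum>j<L. r (int i - int j) * av L \<nu> j))"
    using inner_ab_eq[of L \<nu>] av_inner[OF L, of \<nu>] by simp
  have "c = c * (\<Sum>i<L. (cmod (av L \<nu> i))\<^sup>2)" using av_sq[OF L] by simp
  also have "\<dots> \<le> Re (\<Sum>i<L. cnj (av L \<nu> i) * (\<Sum>j<L. r (int i - int j) * av L \<nu> j))" by (rule pos)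
  finally have q: "c \<le> \<dots>" .
  have "- (C * real L powr (- min \<gamma>0 1)) \<le> Re (\<Sum>i<L. cnj (av L \<nu> i) * bv r L \<nu> i)"
    using inner_ab[OF L, of \<nu>] abs_Re_le_cmod[of "\<Sum>i<L. cnj (av L \<nu> i) * bv r L \<nu> i"] by linarith
  then have "c - C * real L powr (- min \<gamma>0 1) \<le> Re (fser r \<nu>)"
    using q by (subst e) simp
  also have "\<dots> \<le> cmod (fser r \<nu>)" by (rule complex_Re_le_cmod)
  finally show ?thesis .
qed

lemma g_lower: "c \<le> cmod (fser r \<nu>)"
proof (rule ccontr)
  assume "\<not> c \<le> cmod (fser r \<nu>)"
  then have d: "0 < c - cmod (fser r \<nu>)" by simp
  have "((\<lambda>L::nat. real L powr (- min \<gamma>0 1)) \<longlongrightarrow> 0) sequentially"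
    using g0 by (intro tendsto_neg_powr filterlim_real_sequentially) auto
  then have "((\<lambda>L::nat. C * real L powr (- min \<gamma>0 1)) \<longlongrightarrow> C * 0) sequentially"
    by (intro tendsto_mult tendsto_const)
  then have "((\<lambda>L::nat. C * real L powr (- min \<gamma>0 1)) \<longlongrightarrow> 0) sequentially" by simp
  from order_tendstoD(2)[OF this d]
  have "\<forall>\<^sub>F L in sequentially. C * real L powr (- min \<gamma>0 1) < c - cmod (fser r \<nu>)" .
  moreover have "\<forall>\<^sub>F L in sequentially. (1::nat) \<le> L" by (rule eventually_ge_at_top)
  ultimately obtain L where "C * real L powr (- min \<gamma>0 1) < c - cmod (fser r \<nu>)" "1 \<le> L"
    using eventually_happens'[OF sequentially_bot eventually_conj] by blast
  then show False using g_lower_L[of L \<nu>] by linarith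
qed


lemma amgm: "0 < c \<Longrightarrow> (x::real) * y \<le> c / 2 * x\<^sup>2 + y\<^sup>2 / (2 * c)"
proof -
  assume c: "0 < c"
  have "0 \<le> (c * x - y)\<^sup>2" by simp
  then have "2 * c * (x * y) \<le> c * (c * x\<^sup>2) + y\<^sup>2" by (simp add: power2_eq_square algebra_simps)
  then have "2 * c * (x * y) \<le> 2 * c * (c / 2 * x\<^sup>2 + y\<^sup>2 / (2 * c))"
    using c by (simp add: algebra_simps power2_eq_square)
  then show ?thesis using c by (simp add: mult_le_cancel_left_pos)
qed

lemma eps_bound:
  fixes Ri :: "nat \<Rightarrow> nat \<Rightarrow> complex"
  assumes L: "1 \<le> L"
    and I1: "\<And>i k. i < L \<Longrightarrow> k < L \<Longrightarrow> (\<Sum>j<L. r (int i - int j) * Ri j k) = (if i = k then 1 else 0)"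
    and I2: "\<And>i k. i < L \<Longrightarrow> k < L \<Longrightarrow> (\<Sum>j<L. Ri i j * r (int j - int k)) = (if i = k then 1 else 0)"
  shows "cmod (fser r \<nu> * (\<Sum>i<L. cnj (av L \<nu> i) * (\<Sum>j<L. Ri i j * av L \<nu> j)) - 1)
           \<le> (C + C * C / c) / c * real L powr (- min \<gamma>0 1)"
proof -
  define a where "a = av L \<nu>"
  define b where "b = bv r L \<nu>"
  define g where "g = fser r \<nu>"
  define Q where "Q = (\<Sum>i<L. cnj (a i) * (\<Sum>j<L. Ri i j * a j))"
  define z where "z i = (\<Sum>j<L. Ri i j * b j)" for i
  define Ra where "Ra i = (\<Sum>j<L. r (int i - int j) * a j)" for i
  define E where "E = (C * real L powr (- min \<gamma>0 1))"
  have bdef: "b i = g * a i - Ra i" for i unfolding b_def bv_def g_def Ra_def a_def ..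
  have aa: "(\<Sum>i<L. cnj (a i) * a i) = 1" unfolding a_def by (rule av_inner[OF L])
  have RiRa: "(\<Sum>j<L. Ri i j * Ra j) = a i" if i: "i < L" for i
  proof -
    have "(\<Sum>j<L. Ri i j * Ra j) = (\<Sum>j<L. \<Sum>k<L. Ri i j * r (int j - int k) * a k)"
      unfolding Ra_def by (simp add: sum_distrib_left mult.assoc)
    also have "\<dots> = (\<Sum>k<L. (\<Sum>j<L. Ri i j * r (int j - int k)) * a k)"
      by (subst sum.swap) (simp add: sum_distrib_right)
    also have "\<dots> = (\<Sum>k<L. (if i = k then a k else 0))"
      by (rule sum.cong) (auto simp: I2 i)
    also have "\<dots> = a i" using i by simp
    finally show ?thesis .
  qed
  have zi: "z i = g * (\<Sum>j<L. Ri i j * a j) - a i" if "i < L" for i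
  proof -
    have "z i = g * (\<Sum>j<L. Ri i j * a j) - (\<Sum>j<L. Ri i j * Ra j)"
      unfolding z_def bdef by (simp add: sum_subtractf sum_distrib_left algebra_simps)
    then show ?thesis using RiRa that by simp
  qed
  have eps: "(\<Sum>i<L. cnj (a i) * z i) = g * Q - 1"
  proof -
    have "(\<Sum>i<L. cnj (a i) * z i) = (\<Sum>i<L. g * (cnj (a i) * (\<Sum>j<L. Ri i j * a j)) - cnj (a i) * a i)"
      by (rule sum.cong) (auto simp: zi algebra_simps)
    also have "\<dots> = g * Q - 1" unfolding Q_def using aa by (simp add: sum_subtractf sum_distrib_left)
    finally show ?thesis .
  qed
  have Rz: "(\<Sum>j<L. r (int i - int j) * z j) = b i" if i: "i < L" for i
  proof -
    have "(\<Sum>j<L. r (int i - int j) * z j) = (\<Sum>j<L. \<Sum>k<L. r (int i - int j) * Ri j k * b k)"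
      unfolding z_def by (simp add: sum_distrib_left mult.assoc)
    also have "\<dots> = (\<Sum>k<L. (\<Sum>j<L. r (int i - int j) * Ri j k) * b k)"
      by (subst sum.swap) (simp add: sum_distrib_right)
    also have "\<dots> = (\<Sum>k<L. (if i = k then b k else 0))"
      by (rule sum.cong) (auto simp: I1 i)
    also have "\<dots> = b i" using i by simp
    finally show ?thesis .
  qed
  have hermRa: "(\<Sum>i<L. cnj (Ra i) * z i) = (\<Sum>k<L. cnj (a k) * b k)"
  proof -
    have "(\<Sum>i<L. cnj (Ra i) * z i) = (\<Sum>i<L. \<Sum>k<L. cnj (a k) * (r (int k - int i) * z i))"
    proof -
      have "cnj (r (int i - int k)) = r (int k - int i)" for i k
        using herm[of "int i - int k"] by simp
      then show ?thesis unfolding Ra_def by (simp add: sum_distrib_right sum_distrib_left algebra_simps)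
    qed
    also have "\<dots> = (\<Sum>k<L. cnj (a k) * (\<Sum>i<L. r (int k - int i) * z i))"
      by (subst sum.swap) (simp add: sum_distrib_left)
    also have "\<dots> = (\<Sum>k<L. cnj (a k) * b k)"
      by (rule sum.cong) (auto simp: Rz)
    finally show ?thesis .
  qed
  have key: "cnj g * (g * Q - 1) = (\<Sum>k<L. cnj (a k) * b k) + (\<Sum>i<L. cnj (b i) * z i)"
  proof -
    have "(\<Sum>i<L. cnj (b i) * z i) = cnj g * (\<Sum>i<L. cnj (a i) * z i) - (\<Sum>i<L. cnj (Ra i) * z i)"
      unfolding bdef by (simp add: sum_subtractf sum_distrib_left algebra_simps)
    then show ?thesis using eps hermRa by simp
  qed
  define Z where "Z = (\<Sum>i<L. (cmod (z i))\<^sup>2)"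
  define B where "B = (\<Sum>i<L. (cmod (b i))\<^sup>2)"
  have zb: "(\<Sum>i<L. cmod (z i) * cmod (b i)) \<le> c / 2 * Z + B / (2 * c)"
  proof -
    have "(\<Sum>i<L. cmod (z i) * cmod (b i)) \<le> (\<Sum>i<L. c / 2 * (cmod (z i))\<^sup>2 + (cmod (b i))\<^sup>2 / (2 * c))"
      by (intro sum_mono amgm c0)
    also have "\<dots> = c / 2 * Z + B / (2 * c)"
      unfolding Z_def B_def by (simp add: sum.distrib sum_distrib_left sum_divide_distrib)
    finally show ?thesis .
  qed
  have "c * Z \<le> Re (\<Sum>i<L. cnj (z i) * (\<Sum>j<L. r (int i - int j) * z j))"
    unfolding Z_def by (rule pos)
  also have "\<dots> = Re (\<Sum>i<L. cnj (z i) * b i)"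
    by (simp add: Rz)
  also have "\<dots> \<le> cmod (\<Sum>i<L. cnj (z i) * b i)" by (rule complex_Re_le_cmod)
  also have "\<dots> \<le> (\<Sum>i<L. cmod (cnj (z i) * b i))" by (rule norm_sum)
  also have "\<dots> = (\<Sum>i<L. cmod (z i) * cmod (b i))" by (simp add: norm_mult)
  finally have "c * Z \<le> c / 2 * Z + B / (2 * c)" using zb by linarith
  then have Zb: "c / 2 * Z \<le> B / (2 * c)" by simp
  have bz: "cmod (\<Sum>i<L. cnj (b i) * z i) \<le> B / c"
  proof -
    have "cmod (\<Sum>i<L. cnj (b i) * z i) \<le> (\<Sum>i<L. cmod (cnj (b i) * z i))" by (rule norm_sum)
    also have "\<dots> = (\<Sum>i<L. cmod (z i) * cmod (b i))" by (simp add: norm_mult mult.commute)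
    also have "\<dots> \<le> c / 2 * Z + B / (2 * c)" by (rule zb)
    also have "\<dots> \<le> B / c"
    proof -
      have "B / c = B / (2 * c) + B / (2 * c)" using c0 by (simp add: field_simps)
      then show ?thesis using Zb by linarith
    qed
    finally show ?thesis .
  qed
  have Bb: "B \<le> C * C * real L powr (- min \<gamma>0 1)" unfolding B_def b_def by (rule norm_b[OF L])
  have ab: "cmod (\<Sum>k<L. cnj (a k) * b k) \<le> E" unfolding a_def b_def E_def by (rule inner_ab[OF L])
  have "cmod g * cmod (g * Q - 1) = cmod (cnj g * (g * Q - 1))" by (simp add: norm_mult)
  also have "\<dots> \<le> E + B / c" unfolding key by (rule order_trans[OF norm_triangle_ineq add_mono[OF ab bz]])
  also have "\<dots> \<le> E + C * C * real L powr (- min \<gamma>0 1) / c"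
    using Bb c0 by (intro add_left_mono divide_right_mono) auto
  also have "\<dots> = (C + C * C / c) * real L powr (- min \<gamma>0 1)"
    unfolding E_def by (simp add: algebra_simps)
  finally have main: "cmod g * cmod (g * Q - 1) \<le> (C + C * C / c) * real L powr (- min \<gamma>0 1)" .
  have gl: "c \<le> cmod g" unfolding g_def by (rule g_lower)
  have "c * cmod (g * Q - 1) \<le> cmod g * cmod (g * Q - 1)" using gl by (intro mult_right_mono) auto
  with main have "c * cmod (g * Q - 1) \<le> (C + C * C / c) * real L powr (- min \<gamma>0 1)" by linarith
  then have "cmod (g * Q - 1) \<le> (C + C * C / c) * real L powr (- min \<gamma>0 1) / c"
    using c0 by (simp add: field_simps)
  then show ?thesis unfolding g_def Q_def a_def by simp
qed

end


lemma cmod_diff_sq: "(cmod (a - b))\<^sup>2 = (cmod a)\<^sup>2 - 2 * Re (a * cnj b) + (cmod b)\<^sup>2"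
  unfolding cmod_power2 by (simp add: power2_eq_square algebra_simps)

lemma bessel:
  assumes h: "continuous_on {0..1} h"
  shows "(\<Sum>j<N. (cmod (integral {0..1} (\<lambda>\<nu>. h \<nu> * ee \<nu> (int j))))\<^sup>2) \<le> integral {0..1} (\<lambda>\<nu>. (cmod (h \<nu>))\<^sup>2)"
proof -
  define c where "c j = integral {0..1} (\<lambda>\<nu>. h \<nu> * ee \<nu> (int j))" for j
  define P where "P \<nu> = (\<Sum>j<N. c j * ee \<nu> (- int j))" for \<nu>
  define S where "S = (\<Sum>j<N. (cmod (c j))\<^sup>2)"
  have hc: "((\<lambda>\<nu>. h \<nu> * ee \<nu> (int j)) has_integral c j) {0..1}" for j
    unfolding c_def by (intro integrable_integral integrable_continuous_interval continuous_intros h)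
  have i1: "((\<lambda>\<nu>. (cmod (P \<nu>))\<^sup>2) has_integral S) {0..1}"
    unfolding P_def S_def by (rule parseval)
  have "((\<lambda>\<nu>. \<Sum>j<N. cnj (c j) * (h \<nu> * ee \<nu> (int j))) has_integral (\<Sum>j<N. cnj (c j) * c j)) {0..1}"
    by (intro has_integral_sum has_integral_mult_right hc) auto
  moreover have "(\<Sum>j<N. cnj (c j) * (h \<nu> * ee \<nu> (int j))) = h \<nu> * cnj (P \<nu>)" for \<nu>
    unfolding P_def by (simp add: sum_distrib_left ee_cnj algebra_simps)
  moreover have "Re (\<Sum>j<N. cnj (c j) * c j) = S"
    unfolding S_def cmod_power2 by (simp add: power2_eq_square)
  ultimately have "((\<lambda>\<nu>. h \<nu> * cnj (P \<nu>)) has_integral (\<Sum>j<N. cnj (c j) * c j)) {0..1}" by simp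
  from has_integral_linear[OF this bounded_linear_Re]
  have i2: "((\<lambda>\<nu>. Re (h \<nu> * cnj (P \<nu>))) has_integral S) {0..1}"
    using \<open>Re (\<Sum>j<N. cnj (c j) * c j) = S\<close> by (simp add: o_def)
  have i3: "((\<lambda>\<nu>. (cmod (h \<nu>))\<^sup>2) has_integral integral {0..1} (\<lambda>\<nu>. (cmod (h \<nu>))\<^sup>2)) {0..1}"
    by (intro integrable_integral integrable_continuous_interval continuous_intros h)
  have "((\<lambda>\<nu>. (cmod (h \<nu>))\<^sup>2 - 2 * Re (h \<nu> * cnj (P \<nu>)) + (cmod (P \<nu>))\<^sup>2) has_integral
      integral {0..1} (\<lambda>\<nu>. (cmod (h \<nu>))\<^sup>2) - 2 * S + S) {0..1}"
    by (intro has_integral_add has_integral_diff has_integral_mult_right i1 i2 i3)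
  then have "((\<lambda>\<nu>. (cmod (h \<nu> - P \<nu>))\<^sup>2) has_integral integral {0..1} (\<lambda>\<nu>. (cmod (h \<nu>))\<^sup>2) - S) {0..1}"
    by (simp add: cmod_diff_sq)
  then have "0 \<le> integral {0..1} (\<lambda>\<nu>. (cmod (h \<nu>))\<^sup>2) - S"
    by (rule has_integral_nonneg) auto
  then show ?thesis unfolding S_def c_def by simp
qed

lemma mult_mat_vec_sum:
  assumes "A \<in> carrier_mat n k" "v \<in> carrier_vec k" "i < n"
  shows "(A *\<^sub>v v) $ i = (\<Sum>j<k. A $$ (i, j) * v $ j)"
  using assms by (simp add: scalar_prod_def atLeast0LessThan)

lemma mult_mat_sum:
  assumes "A \<in> carrier_mat n k" "B \<in> carrier_mat k p" "i < n" "j < p"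
  shows "(A * B) $$ (i, j) = (\<Sum>l<k. A $$ (i, l) * B $$ (l, j))"
  using assms by (simp add: scalar_prod_def atLeast0LessThan)

lemma toeplitz_bound:
  fixes E :: "complex mat" and F :: "real \<Rightarrow> complex"
  assumes Fc: "continuous_on {0..1} F" and Fb: "\<And>\<nu>. \<nu> \<in> {0..1} \<Longrightarrow> cmod (F \<nu>) \<le> B"
    and E: "E \<in> carrier_mat N N"
    and Ej: "\<And>j k. j < N \<Longrightarrow> k < N \<Longrightarrow> E $$ (j, k) = integral {0..1} (\<lambda>\<nu>. F \<nu> * ee \<nu> (int j - int k))"
  shows "op_norm E \<le> B"
proof -
  have "cmod (F 0) \<le> B" by (rule Fb) auto
  then have B0: "0 \<le> B" using norm_ge_zero[of "F 0"] by linarith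
  have vb: "vnorm (E *\<^sub>v v) \<le> B" if v: "v \<in> carrier_vec N" "vnorm v \<le> 1" for v
  proof -
    define X where "X \<nu> = (\<Sum>k<N. v $ k * ee \<nu> (- int k))" for \<nu>
    have Xc: "continuous_on {0..1} X" unfolding X_def by (intro continuous_intros)
    have ent: "(E *\<^sub>v v) $ j = integral {0..1} (\<lambda>\<nu>. (F \<nu> * X \<nu>) * ee \<nu> (int j))" if j: "j < N" for j
    proof -
      have "(E *\<^sub>v v) $ j = (\<Sum>k<N. integral {0..1} (\<lambda>\<nu>. F \<nu> * ee \<nu> (int j - int k)) * v $ k)"
        using mult_mat_vec_sum[OF E v(1) j] Ej[OF j] by simp
      also have "\<dots> = (\<Sum>k<N. integral {0..1} (\<lambda>\<nu>. F \<nu> * ee \<nu> (int j - int k) * v $ k))"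
        by (simp add: integral_mult_left)
      also have "\<dots> = integral {0..1} (\<lambda>\<nu>. \<Sum>k<N. F \<nu> * ee \<nu> (int j - int k) * v $ k)"
        by (rule integral_sum[symmetric]) (auto intro!: integrable_continuous_interval continuous_intros Fc)
      also have "\<dots> = integral {0..1} (\<lambda>\<nu>. (F \<nu> * X \<nu>) * ee \<nu> (int j))"
      proof -
        have "(\<Sum>k<N. F \<nu> * ee \<nu> (int j - int k) * v $ k) = (F \<nu> * X \<nu>) * ee \<nu> (int j)" for \<nu>
        proof -
          have "ee \<nu> (int j - int k) = ee \<nu> (- int k) * ee \<nu> (int j)" for k by (simp add: ee_add)
          then show ?thesis unfolding X_def by (simp add: sum_distrib_left sum_distrib_right algebra_simps)
        qed
        then show ?thesis by simp
      qed
      finally show ?thesis .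
    qed
    have dimEv: "dim_vec (E *\<^sub>v v) = N" using E by simp
    have "(\<Sum>j<N. (cmod ((E *\<^sub>v v) $ j))\<^sup>2) = (\<Sum>j<N. (cmod (integral {0..1} (\<lambda>\<nu>. (F \<nu> * X \<nu>) * ee \<nu> (int j))))\<^sup>2)"
      by (simp add: ent)
    also have "\<dots> \<le> integral {0..1} (\<lambda>\<nu>. (cmod (F \<nu> * X \<nu>))\<^sup>2)"
      by (rule bessel) (intro continuous_intros Fc Xc)
    also have "\<dots> \<le> integral {0..1} (\<lambda>\<nu>. B\<^sup>2 * (cmod (X \<nu>))\<^sup>2)"
    proof (rule integral_le)
      show "(\<lambda>\<nu>. (cmod (F \<nu> * X \<nu>))\<^sup>2) integrable_on {0..1}"
        by (intro integrable_continuous_interval continuous_intros Fc Xc)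
      show "(\<lambda>\<nu>. B\<^sup>2 * (cmod (X \<nu>))\<^sup>2) integrable_on {0..1}"
        by (intro integrable_continuous_interval continuous_intros Fc Xc)
      fix \<nu> :: real assume "\<nu> \<in> {0..1}"
      then have "cmod (F \<nu>) \<le> B" by (rule Fb)
      then have "(cmod (F \<nu>))\<^sup>2 \<le> B\<^sup>2" by (intro power_mono) auto
      then show "(cmod (F \<nu> * X \<nu>))\<^sup>2 \<le> B\<^sup>2 * (cmod (X \<nu>))\<^sup>2"
        by (simp add: norm_mult power_mult_distrib mult_right_mono)
    qed
    also have "\<dots> = B\<^sup>2 * (\<Sum>k<N. (cmod (v $ k))\<^sup>2)"
      unfolding X_def using parseval[where n=N and x="\<lambda>k. v $ k"] by (simp add: integral_unique)
    finally have le: "(\<Sum>j<N. (cmod ((E *\<^sub>v v) $ j))\<^sup>2) \<le> B\<^sup>2 * (\<Sum>k<N. (cmod (v $ k))\<^sup>2)" .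
    have "vnorm (E *\<^sub>v v) = sqrt (\<Sum>j<N. (cmod ((E *\<^sub>v v) $ j))\<^sup>2)"
      unfolding vnorm_def dimEv ..
    also have "\<dots> \<le> sqrt (B\<^sup>2 * (\<Sum>k<N. (cmod (v $ k))\<^sup>2))" using le by simp
    also have "\<dots> = B * vnorm v"
      using v(1) B0 by (simp add: vnorm_def real_sqrt_mult)
    also have "\<dots> \<le> B" using v(2) B0 by (simp add: mult_left_le)
    finally show ?thesis .
  qed
  have ne: "{vnorm (E *\<^sub>v v) | v. v \<in> carrier_vec (dim_col E) \<and> vnorm v \<le> 1} \<noteq> {}"
  proof -
    have "vnorm (0\<^sub>v N) \<le> 1" by (simp add: vnorm_def)
    moreover have "0\<^sub>v N \<in> carrier_vec N" by simp
    ultimately show ?thesis using E by blast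
  qed
  show ?thesis unfolding op_norm_def
    by (rule cSup_least[OF ne]) (use vb E in auto)
qed


lemma mat_inv_props:
  fixes A :: "complex mat"
  assumes A: "A \<in> carrier_mat n n"
    and inj: "\<And>v. v \<in> carrier_vec n \<Longrightarrow> A *\<^sub>v v = 0\<^sub>v n \<Longrightarrow> v = 0\<^sub>v n"
  shows "mat_inv A \<in> carrier_mat n n \<and> A * mat_inv A = 1\<^sub>m n \<and> mat_inv A * A = 1\<^sub>m n"
proof -
  have "det A \<noteq> 0" using det_0_iff_vec_prod_zero_field[OF A] inj by blast
  from det_non_zero_imp_unit[OF A this, unfolded Units_def, of "()"]
  obtain B where B: "B \<in> carrier_mat n n" and BA: "B * A = 1\<^sub>m n" and AB: "A * B = 1\<^sub>m n"
    by (auto simp: ring_mat_def)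
  have dimA: "dim_row A = n" using A by auto
  have uniq: "B' = B" if B': "B' \<in> carrier_mat n n \<and> A * B' = 1\<^sub>m n \<and> B' * A = 1\<^sub>m n" for B'
  proof -
    have "B' = B' * (A * B)" using B' AB right_mult_one_mat[of B' n n] by simp
    also have "\<dots> = (B' * A) * B" by (rule sym, rule assoc_mult_mat) (use B' A B in auto)
    also have "\<dots> = B" using B' B by simp
    finally show ?thesis .
  qed
  have "mat_inv A = B"
    unfolding mat_inv_def dimA
  proof (rule the_equality)
    show "B \<in> carrier_mat n n \<and> A * B = 1\<^sub>m n \<and> B * A = 1\<^sub>m n" using B AB BA by blast
  next
    fix B' assume "B' \<in> carrier_mat n n \<and> A * B' = 1\<^sub>m n \<and> B' * A = 1\<^sub>m n"
    then show "B' = B" by (rule uniq)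
  qed
  then show ?thesis using B AB BA by simp
qed

lemma cov_ee: "cov S m k = integral {0..1} (\<lambda>\<nu>. complex_of_real (S m \<nu>) * ee \<nu> k)"
  unfolding cov_def ee_def ..

lemma cov_herm: "cov S m (- k) = cnj (cov S m k)"
  unfolding cov_ee integral_cnj by (simp add: ee_cnj)

lemma toep_carrier: "toep S m L \<in> carrier_mat L L"
  unfolding toep_def by simp

lemma toep_index: "i < L \<Longrightarrow> j < L \<Longrightarrow> toep S m L $$ (i, j) = cov S m (int i - int j)"
  unfolding toep_def by simp

lemma avec_carrier: "avec L \<nu> \<in> carrier_vec L"
  unfolding avec_def dvec_def by simp

lemma avec_index: "i < L \<Longrightarrow> avec L \<nu> $ i = av L \<nu> i"
  unfolding avec_def dvec_def av_def ee_def by simp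

lemma dvec_index: "j < N \<Longrightarrow> dvec N \<nu> $ j = ee \<nu> (int j)"
  unfolding dvec_def ee_def by simp

definition Qf :: "complex mat \<Rightarrow> nat \<Rightarrow> real \<Rightarrow> complex" where
  "Qf B L \<nu> = (\<Sum>i<L. cnj (av L \<nu> i) * (\<Sum>j<L. B $$ (i, j) * av L \<nu> j))"

lemma epsML_eq:
  assumes "mat_inv (toep S m L) \<in> carrier_mat L L"
  shows "epsML S m L \<nu> = complex_of_real (S m \<nu>) * Qf (mat_inv (toep S m L)) L \<nu> - 1"
proof -
  have "(\<Sum>i<L. cnj (avec L \<nu> $ i) * ((mat_inv (toep S m L) *\<^sub>v avec L \<nu>) $ i)) = Qf (mat_inv (toep S m L)) L \<nu>"
    unfolding Qf_def
  proof (rule sum.cong)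
    fix i assume "i \<in> {..<L}"
    then have i: "i < L" by simp
    show "cnj (avec L \<nu> $ i) * ((mat_inv (toep S m L) *\<^sub>v avec L \<nu>) $ i) =
      cnj (av L \<nu> i) * (\<Sum>j<L. mat_inv (toep S m L) $$ (i, j) * av L \<nu> j)"
      using mult_mat_vec_sum[OF assms avec_carrier i] avec_index i by simp
  qed simp
  then show ?thesis unfolding epsML_def by simp
qed

lemma av_prod: "1 \<le> L \<Longrightarrow> cnj (av L \<nu> i) * av L \<nu> j = complex_of_real (1 / real L) * ee \<nu> (int j - int i)"
proof -
  assume L: "1 \<le> L"
  have "cnj (av L \<nu> i) * av L \<nu> j = (complex_of_real (1 / sqrt (real L)) * complex_of_real (1 / sqrt (real L))) * (ee \<nu> (- int i) * ee \<nu> (int j))"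
    unfolding av_def by (simp add: ee_cnj algebra_simps)
  also have "complex_of_real (1 / sqrt (real L)) * complex_of_real (1 / sqrt (real L)) = complex_of_real (1 / real L)"
    using L by (simp flip: of_real_mult)
  also have "ee \<nu> (- int i) * ee \<nu> (int j) = ee \<nu> (int j - int i)" by (simp add: ee_add)
  finally show ?thesis .
qed

lemma continuous_av[continuous_intros]: "continuous_on A (\<lambda>\<nu>. av L \<nu> i)"
  unfolding av_def by (intro continuous_intros)

lemma continuous_Qf[continuous_intros]: "continuous_on A (\<lambda>\<nu>. Qf B L \<nu>)"
  unfolding Qf_def by (intro continuous_intros)

lemma Qf_trig:
  assumes L: "1 \<le> L"
  shows "Qf B L \<nu> * ee \<nu> p = (\<Sum>x\<in>{..<L}\<times>{..<L}. (B $$ (fst x, snd x) / of_nat L) * ee \<nu> (int (snd x) - int (fst x) + p))"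
proof -
  have "Qf B L \<nu> * ee \<nu> p = (\<Sum>i<L. \<Sum>j<L. B $$ (i, j) * (cnj (av L \<nu> i) * av L \<nu> j) * ee \<nu> p)"
    unfolding Qf_def by (simp add: sum_distrib_left sum_distrib_right algebra_simps)
  also have "\<dots> = (\<Sum>i<L. \<Sum>j<L. (B $$ (i, j) / of_nat L) * ee \<nu> (int j - int i + p))"
    by (simp add: av_prod[OF L] mult.assoc ee_add divide_inverse of_real_inverse)
  also have "\<dots> = (\<Sum>x\<in>{..<L}\<times>{..<L}. (B $$ (fst x, snd x) / of_nat L) * ee \<nu> (int (snd x) - int (fst x) + p))"
    by (simp add: sum.cartesian_product case_prod_beta)
  finally show ?thesis .
qed

lemma integral_eps_phi:
  assumes L: "1 \<le> L" and phi: "\<And>q. ((\<lambda>\<nu>. \<phi> \<nu> * ee \<nu> q) has_integral r q) {0..1}"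
  shows "((\<lambda>\<nu>. (\<phi> \<nu> * Qf B L \<nu> - 1) * ee \<nu> p) has_integral
     ((\<Sum>x\<in>{..<L}\<times>{..<L}. (B $$ (fst x, snd x) / of_nat L) * r (int (snd x) - int (fst x) + p)) - (if p = 0 then 1 else 0))) {0..1}"
proof -
  have "((\<lambda>\<nu>. \<phi> \<nu> * (\<Sum>x\<in>{..<L}\<times>{..<L}. (B $$ (fst x, snd x) / of_nat L) * ee \<nu> (int (snd x) - int (fst x) + p)) - ee \<nu> p) has_integral
     ((\<Sum>x\<in>{..<L}\<times>{..<L}. (B $$ (fst x, snd x) / of_nat L) * r (int (snd x) - int (fst x) + p)) - (if p = 0 then 1 else 0))) {0..1}"
    by (intro has_integral_diff has_integral_coef[OF _ phi] ee_integral) auto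
  moreover have "(\<phi> \<nu> * Qf B L \<nu> - 1) * ee \<nu> p = \<phi> \<nu> * (\<Sum>x\<in>{..<L}\<times>{..<L}. (B $$ (fst x, snd x) / of_nat L) * ee \<nu> (int (snd x) - int (fst x) + p)) - ee \<nu> p" for \<nu>
    using Qf_trig[OF L, of B \<nu> p] by (simp add: algebra_simps)
  ultimately show ?thesis by simp
qed


lemma wpos_cov:
  fixes S :: "nat \<Rightarrow> real \<Rightarrow> real"
  assumes g0: "0 < \<gamma>0" and c0: "0 < c"
    and Sint: "S m integrable_on {0..1}" and Slb: "\<And>\<nu>. \<nu> \<in> {0..1} \<Longrightarrow> c \<le> S m \<nu>"
    and sw: "(\<lambda>n::int. (1 + \<bar>real_of_int n\<bar>) powr \<gamma>0 * cmod (cov S m n)) summable_on UNIV"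
    and sC: "(\<Sum>\<^sub>\<infinity>n::int. (1 + \<bar>real_of_int n\<bar>) powr \<gamma>0 * cmod (cov S m n)) \<le> C"
  shows "wpos (cov S m) \<gamma>0 C c"
proof (unfold_locales)
  show "0 < \<gamma>0" "0 < c" by (fact g0, fact c0)
  show "(\<lambda>n::int. (1 + \<bar>real_of_int n\<bar>) powr \<gamma>0 * cmod (cov S m n)) summable_on UNIV" by (fact sw)
  show "(\<Sum>\<^sub>\<infinity>n::int. (1 + \<bar>real_of_int n\<bar>) powr \<gamma>0 * cmod (cov S m n)) \<le> C" by (fact sC)
  show "cov S m (- k) = cnj (cov S m k)" for k by (rule cov_herm)
  show "c * (\<Sum>i<n. (cmod (x i))\<^sup>2) \<le> Re (\<Sum>i<n. cnj (x i) * (\<Sum>j<n. cov S m (int i - int j) * x j))" for n x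
    unfolding cov_ee by (rule quad_pos[OF Sint Slb]) (use c0 in auto)
qed

lemma main_bound:
  fixes S :: "nat \<Rightarrow> real \<Rightarrow> real" and \<gamma>0 C c :: real
  assumes g0: "0 < \<gamma>0" and c0: "0 < c"
    and Sint: "\<And>m. 1 \<le> m \<Longrightarrow> S m integrable_on {0..1}"
    and Slb: "\<And>m \<nu>. 1 \<le> m \<Longrightarrow> \<nu> \<in> {0..1} \<Longrightarrow> c \<le> S m \<nu>"
    and sw: "\<And>m. 1 \<le> m \<Longrightarrow> (\<lambda>n::int. (1 + \<bar>real_of_int n\<bar>) powr \<gamma>0 * cmod (cov S m n)) summable_on UNIV"
    and sC: "\<And>m. 1 \<le> m \<Longrightarrow> (\<Sum>\<^sub>\<infinity>n::int. (1 + \<bar>real_of_int n\<bar>) powr \<gamma>0 * cmod (cov S m n)) \<le> C"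
    and L: "1 \<le> L" and M: "1 \<le> M" and N: "1 \<le> N"
  shows "op_norm (EN S M L N) \<le> (C + C * C / c) / c * real L powr (- min \<gamma>0 1)"
proof -
  define K where "K = (C + C * C / c) / c * real L powr (- min \<gamma>0 1)"
  define Ri where "Ri m = mat_inv (toep S m L)" for m
  have W: "wpos (cov S m) \<gamma>0 C c" if m: "1 \<le> m" for m
    by (rule wpos_cov[OF g0 c0 Sint[OF m] Slb[OF m] sw[OF m] sC[OF m]]) auto
  have inv: "Ri m \<in> carrier_mat L L \<and> toep S m L * Ri m = 1\<^sub>m L \<and> Ri m * toep S m L = 1\<^sub>m L"
    if m: "1 \<le> m" for m
    unfolding Ri_def
  proof (rule mat_inv_props[OF toep_carrier])
    fix v :: "complex vec" assume v: "v \<in> carrier_vec L" and Rv: "toep S m L *\<^sub>v v = 0\<^sub>v L"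
    have "c * (\<Sum>i<L. (cmod (v $ i))\<^sup>2) \<le> Re (\<Sum>i<L. cnj (v $ i) * (\<Sum>j<L. cov S m (int i - int j) * v $ j))"
      by (rule wpos.pos[OF W[OF m]])
    also have "(\<Sum>i<L. cnj (v $ i) * (\<Sum>j<L. cov S m (int i - int j) * v $ j)) = 0"
    proof (rule sum.neutral, intro ballI)
      fix i assume "i \<in> {..<L}"
      then have i: "i < L" by simp
      have "(\<Sum>j<L. cov S m (int i - int j) * v $ j) = (toep S m L *\<^sub>v v) $ i"
        using mult_mat_vec_sum[OF toep_carrier v i] toep_index i by simp
      also have "\<dots> = 0" using Rv i by simp
      finally show "cnj (v $ i) * (\<Sum>j<L. cov S m (int i - int j) * v $ j) = 0" by simp
    qed
    finally have "(\<Sum>i<L. (cmod (v $ i))\<^sup>2) \<le> 0" using c0 by (simp add: mult_le_0_iff)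
    moreover have "0 \<le> (\<Sum>i<L. (cmod (v $ i))\<^sup>2)" by (intro sum_nonneg) auto
    ultimately have "(\<Sum>i<L. (cmod (v $ i))\<^sup>2) = 0" by linarith
    then have "\<forall>i\<in>{..<L}. (cmod (v $ i))\<^sup>2 = 0"
      by (subst sum_nonneg_eq_0_iff[symmetric]) auto
    then show "v = 0\<^sub>v L" using v by (intro eq_vecI) auto
  qed
  have epsb: "cmod (fser (cov S m) \<nu> * Qf (Ri m) L \<nu> - 1) \<le> K" if m: "1 \<le> m" for m \<nu>
  proof -
    have RiC: "Ri m \<in> carrier_mat L L" and RR: "toep S m L * Ri m = 1\<^sub>m L" and RR2: "Ri m * toep S m L = 1\<^sub>m L"
      using inv[OF m] by auto
    have I1: "(\<Sum>j<L. cov S m (int i - int j) * Ri m $$ (j, k)) = (if i = k then 1 else 0)" if "i < L" "k < L" for i k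
    proof -
      have "(toep S m L * Ri m) $$ (i, k) = (\<Sum>j<L. toep S m L $$ (i, j) * Ri m $$ (j, k))"
        by (rule mult_mat_sum[OF toep_carrier RiC that])
      also have "\<dots> = (\<Sum>j<L. cov S m (int i - int j) * Ri m $$ (j, k))"
        using that by (intro sum.cong) (auto simp: toep_index)
      finally show ?thesis using RR that by simp
    qed
    have I2: "(\<Sum>j<L. Ri m $$ (i, j) * cov S m (int j - int k)) = (if i = k then 1 else 0)" if "i < L" "k < L" for i k
    proof -
      have "(Ri m * toep S m L) $$ (i, k) = (\<Sum>j<L. Ri m $$ (i, j) * toep S m L $$ (j, k))"
        by (rule mult_mat_sum[OF RiC toep_carrier that])
      also have "\<dots> = (\<Sum>j<L. Ri m $$ (i, j) * cov S m (int j - int k))"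
        using that by (intro sum.cong) (auto simp: toep_index)
      finally show ?thesis using RR2 that by simp
    qed
    show ?thesis unfolding K_def Qf_def
      by (rule wpos.eps_bound[OF W[OF m] L, where Ri = "\<lambda>i j. Ri m $$ (i, j)"]) (use I1 I2 in auto)
  qed
  define F where "F \<nu> = (1 / of_nat M) * (\<Sum>m=1..M. fser (cov S m) \<nu> * Qf (Ri m) L \<nu> - 1)" for \<nu>
  have Fb: "cmod (F \<nu>) \<le> K" for \<nu>
  proof -
    have "cmod (F \<nu>) = (1 / real M) * cmod (\<Sum>m=1..M. fser (cov S m) \<nu> * Qf (Ri m) L \<nu> - 1)"
      unfolding F_def by (simp add: norm_mult norm_divide)
    also have "\<dots> \<le> (1 / real M) * (\<Sum>m=1..M. cmod (fser (cov S m) \<nu> * Qf (Ri m) L \<nu> - 1))"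
      by (intro mult_left_mono norm_sum) auto
    also have "\<dots> \<le> (1 / real M) * (\<Sum>m=1..M. K)"
      by (intro mult_left_mono sum_mono epsb) auto
    also have "\<dots> = K" using M by simp
    finally show ?thesis .
  qed
  have Fc: "continuous_on {0..1} F"
  proof -
    have "continuous_on {0..1} (fser (cov S m))" if "m \<in> {1..M}" for m
      using that by (intro fser_continuous wsum.sc[OF wpos.axioms(1)[OF W]]) auto
    then show ?thesis unfolding F_def by (intro continuous_intros) auto
  qed
  have Ej: "EN S M L N $$ (j, k) = integral {0..1} (\<lambda>\<nu>. F \<nu> * ee \<nu> (int j - int k))" if jk: "j < N" "k < N" for j k
  proof -
    define p where "p = int j - int k"
    define X where "X m = (\<Sum>x\<in>{..<L}\<times>{..<L}. (Ri m $$ (fst x, snd x) / of_nat L) * cov S m (int (snd x) - int (fst x) + p)) - (if p = 0 then 1 else 0)" for m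
    have h1: "((\<lambda>\<nu>. (complex_of_real (S m \<nu>) * Qf (Ri m) L \<nu> - 1) * ee \<nu> p) has_integral X m) {0..1}" if m: "m \<in> {1..M}" for m
    proof -
      have m1: "1 \<le> m" using m by simp
      have "((\<lambda>\<nu>. complex_of_real (S m \<nu>) * ee \<nu> q) has_integral cov S m q) {0..1}" for q
        unfolding cov_ee by (rule S_coef[OF Sint[OF m1]]) (use Slb[OF m1] c0 in force)
      then show ?thesis unfolding X_def by (rule integral_eps_phi[OF L])
    qed
    have h2: "((\<lambda>\<nu>. (fser (cov S m) \<nu> * Qf (Ri m) L \<nu> - 1) * ee \<nu> p) has_integral X m) {0..1}" if m: "m \<in> {1..M}" for m
    proof -
      have m1: "1 \<le> m" using m by simp
      have "((\<lambda>\<nu>. fser (cov S m) \<nu> * ee \<nu> q) has_integral cov S m q) {0..1}" for q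
        by (rule fser_coef[OF wsum.sc[OF wpos.axioms(1)[OF W[OF m1]]]])
      then show ?thesis unfolding X_def by (rule integral_eps_phi[OF L])
    qed
    have H1: "((\<lambda>\<nu>. (1 / of_nat M) * (\<Sum>m=1..M. (complex_of_real (S m \<nu>) * Qf (Ri m) L \<nu> - 1) * ee \<nu> p))
        has_integral (1 / of_nat M) * (\<Sum>m=1..M. X m)) {0..1}"
      by (intro has_integral_mult_right has_integral_sum h1) auto
    have H2: "((\<lambda>\<nu>. (1 / of_nat M) * (\<Sum>m=1..M. (fser (cov S m) \<nu> * Qf (Ri m) L \<nu> - 1) * ee \<nu> p))
        has_integral (1 / of_nat M) * (\<Sum>m=1..M. X m)) {0..1}"
      by (intro has_integral_mult_right has_integral_sum h2) auto
    have e1: "((1 / of_nat M) * (\<Sum>m=1..M. epsML S m L \<nu>)) * (dvec N \<nu> $ j) * cnj (dvec N \<nu> $ k)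
        = (1 / of_nat M) * (\<Sum>m=1..M. (complex_of_real (S m \<nu>) * Qf (Ri m) L \<nu> - 1) * ee \<nu> p)" for \<nu>
    proof -
      have "(dvec N \<nu> $ j) * cnj (dvec N \<nu> $ k) = ee \<nu> p"
        using jk by (simp add: dvec_index ee_cnj ee_add p_def)
      moreover have "(\<Sum>m=1..M. epsML S m L \<nu>) = (\<Sum>m=1..M. complex_of_real (S m \<nu>) * Qf (Ri m) L \<nu> - 1)"
        by (rule sum.cong) (auto simp: Ri_def intro!: epsML_eq inv[unfolded Ri_def, THEN conjunct1])
      ultimately show ?thesis by (simp add: sum_distrib_right mult.assoc)
    qed
    have e2: "F \<nu> * ee \<nu> (int j - int k) = (1 / of_nat M) * (\<Sum>m=1..M. (fser (cov S m) \<nu> * Qf (Ri m) L \<nu> - 1) * ee \<nu> p)" for \<nu>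
      unfolding F_def p_def by (simp add: sum_distrib_right mult.assoc)
    have "EN S M L N $$ (j, k) = integral {0..1} (\<lambda>\<nu>. ((1 / of_nat M) * (\<Sum>m=1..M. epsML S m L \<nu>)) * (dvec N \<nu> $ j) * cnj (dvec N \<nu> $ k))"
      unfolding EN_def using jk by simp
    also have "\<dots> = (1 / of_nat M) * (\<Sum>m=1..M. X m)"
      unfolding e1 using H1 by (rule integral_unique)
    also have "\<dots> = integral {0..1} (\<lambda>\<nu>. F \<nu> * ee \<nu> (int j - int k))"
      unfolding e2 using H2 by (rule integral_unique[symmetric])
    finally show ?thesis .
  qed
  have "op_norm (EN S M L N) \<le> K"
    by (rule toeplitz_bound[OF Fc _ _ Ej]) (auto simp: Fb EN_def)
  then show ?thesis unfolding K_def .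
qed


theorem corollary5p4:
  fixes S :: "nat \<Rightarrow> real \<Rightarrow> real" and \<gamma>0 :: real
  assumes density: "\<forall>m\<ge>1. S m integrable_on {0..1}"
    and A3_upper: "\<exists>C. \<forall>m\<ge>1. \<forall>\<nu>\<in>{0..1}. S m \<nu> \<le> C"
    and A3_lower: "\<exists>c>0. \<forall>m\<ge>1. \<forall>\<nu>\<in>{0..1}. c \<le> S m \<nu>"
    and A5_pos: "\<gamma>0 > 0"
    and A5: "\<exists>C. \<forall>m\<ge>1.
               (\<lambda>n::int. (1 + \<bar>real_of_int n\<bar>) powr \<gamma>0 * cmod (cov S m n)) summable_on UNIV \<and>
               (\<Sum>\<^sub>\<infinity>n::int. (1 + \<bar>real_of_int n\<bar>) powr \<gamma>0 * cmod (cov S m n)) \<le> C"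
  shows "(\<gamma>0 \<le> 1 \<longrightarrow>
            (\<forall>\<gamma><\<gamma>0. \<exists>\<kappa>::real. \<forall>L M N::nat. L \<ge> 1 \<and> M \<ge> 1 \<and> N \<ge> 1 \<longrightarrow>
                op_norm (EN S M L N) \<le> \<kappa> / real L powr \<gamma>)) \<and>
         (\<gamma>0 > 1 \<longrightarrow>
            (\<exists>\<kappa>::real. \<forall>L M N::nat. L \<ge> 1 \<and> M \<ge> 1 \<and> N \<ge> 1 \<longrightarrow>
                op_norm (EN S M L N) \<le> \<kappa> / real L))"
proof -
  obtain C where hC: "\<And>m. 1 \<le> m \<Longrightarrow> (\<lambda>n::int. (1 + \<bar>real_of_int n\<bar>) powr \<gamma>0 * cmod (cov S m n)) summable_on UNIV \<and>
               (\<Sum>\<^sub>\<infinity>n::int. (1 + \<bar>real_of_int n\<bar>) powr \<gamma>0 * cmod (cov S m n)) \<le> C"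
    using A5 by blast
  obtain c where c0: "0 < c" and hc: "\<And>m \<nu>. 1 \<le> m \<Longrightarrow> \<nu> \<in> {0..1} \<Longrightarrow> c \<le> S m \<nu>"
    using A3_lower by blast
  define K where "K = (C + C * C / c) / c"
  have mb: "op_norm (EN S M L N) \<le> K * real L powr (- min \<gamma>0 1)" if "1 \<le> L" "1 \<le> M" "1 \<le> N" for L M N
    unfolding K_def
    by (rule main_bound[OF A5_pos c0 _ hc _ _ that]) (use density hC in auto)
  have C0: "0 \<le> C"
  proof -
    have "0 \<le> (\<Sum>\<^sub>\<infinity>n::int. (1 + \<bar>real_of_int n\<bar>) powr \<gamma>0 * cmod (cov S 1 n))"
      by (intro infsum_nonneg) auto
    then show ?thesis using hC[of 1] by linarith
  qed
  have K0: "0 \<le> K" unfolding K_def using C0 c0 by simp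
  show ?thesis
  proof (intro conjI impI allI)
    fix \<gamma> assume g1: "\<gamma>0 \<le> 1" and g: "\<gamma> < \<gamma>0"
    show "\<exists>\<kappa>::real. \<forall>L M N::nat. L \<ge> 1 \<and> M \<ge> 1 \<and> N \<ge> 1 \<longrightarrow> op_norm (EN S M L N) \<le> \<kappa> / real L powr \<gamma>"
    proof (intro exI[of _ K] allI impI)
      fix L M N :: nat assume h: "L \<ge> 1 \<and> M \<ge> 1 \<and> N \<ge> 1"
      have "op_norm (EN S M L N) \<le> K * real L powr (- \<gamma>0)" using mb h g1 by (simp add: min_def)
      also have "\<dots> \<le> K * real L powr (- \<gamma>)"
        using h g K0 by (intro mult_left_mono powr_mono) auto
      also have "\<dots> = K / real L powr \<gamma>" by (simp add: powr_minus_divide)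
      finally show "op_norm (EN S M L N) \<le> K / real L powr \<gamma>" .
    qed
  next
    assume g1: "1 < \<gamma>0"
    show "\<exists>\<kappa>::real. \<forall>L M N::nat. L \<ge> 1 \<and> M \<ge> 1 \<and> N \<ge> 1 \<longrightarrow> op_norm (EN S M L N) \<le> \<kappa> / real L"
    proof (intro exI[of _ K] allI impI)
      fix L M N :: nat assume h: "L \<ge> 1 \<and> M \<ge> 1 \<and> N \<ge> 1"
      have "op_norm (EN S M L N) \<le> K * real L powr (- 1)" using mb h g1 by (simp add: min_def)
      also have "\<dots> = K / real L" using h by (simp add: powr_minus_divide)
      finally show "op_norm (EN S M L N) \<le> K / real L" .
    qed
  qed
qed

end
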